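(* For the one-dimensional Model I with parameter $\delta$, the expected number $\mathbb{E}[\tau]$ of consecutive traversals of the first edge satisfies $\mathbb{E}[\tau]\to\infty$ as $\delta\to0^+$, and more precisely $\mathbb{E}[\tau]$ is of order $|\log\delta|$: there exist constants $0<c\le C<\infty$ with $c|\log\delta|\le\mathbb{E}[\tau]\le C|\log\delta|$ for all sufficiently small $\delta>0$.
   Context: Model I on $\mathbb{Z}$ with parameter $\delta>0$: $S_0=0$, $S_1=\pm1$ with probability $1/2$ each. For $n\ge1$ let $e_n=\{S_{n-1},S_n\}$ and $m_n=\max\{k\ge1: e_{n-l+1}=e_n \text{ for all } 1\le l\le k\}$. Conditionally on $\sigma(S_0,\dots,S_n)$, the walk recrosses $e_n$ (i.e. $S_{n+1}=S_{n-1}$) with probability $\frac{1+m_n}{2+m_n}-\delta$ and otherwise crosses the other edge at $S_n$, with probability $\frac{1}{2+m_n}+\delta$. $\tau=\sup\{n\ge1: S_m\in\{0,S_1\}\ \text{for all } m\le n\}$. *)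

theory Defs
  imports "HOL-Probability.Probability"
begin

text \<open>Model I on the integers, realised on the canonical probability space of an
i.i.d. sequence of Uniform[0,1] variables: omega 0 decides the sign of S_1, and
omega n (n >= 1) decides whether step n+1 recrosses the current edge e_n
(namely iff omega n < (1+m_n)/(2+m_n) - delta).
The state at time n >= 1 is (S_(n-1), S_n, m_n).\<close>

fun modelI_state :: "real \<Rightarrow> (nat \<Rightarrow> real) \<Rightarrow> nat \<Rightarrow> int \<times> int \<times> nat" where
  "modelI_state \<delta> \<omega> 0 = (0, 0, 0)"
| "modelI_state \<delta> \<omega> (Suc 0) = (0, (if \<omega> 0 < 1/2 then 1 else -1), 1)"
| "modelI_state \<delta> \<omega> (Suc (Suc n)) =
     (case modelI_state \<delta> \<omega> (Suc n) of (p, c, m) \<Rightarrow>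
        if \<omega> (Suc n) < (1 + real m) / (2 + real m) - \<delta>
        then (c, p, Suc m)
        else (c, 2 * c - p, 1))"

definition modelI_S :: "real \<Rightarrow> (nat \<Rightarrow> real) \<Rightarrow> nat \<Rightarrow> int" where
  "modelI_S \<delta> \<omega> n = (if n = 0 then 0 else fst (snd (modelI_state \<delta> \<omega> n)))"

definition modelI_tau :: "real \<Rightarrow> (nat \<Rightarrow> real) \<Rightarrow> enat" where
  "modelI_tau \<delta> \<omega> =
     (SUP n \<in> {n. 1 \<le> n \<and> (\<forall>m\<le>n. modelI_S \<delta> \<omega> m \<in> {0, modelI_S \<delta> \<omega> 1})}. enat n)"

definition modelI_space :: "(nat \<Rightarrow> real) measure" where
  "modelI_space = PiM UNIV (\<lambda>_. uniform_measure lborel {0..1::real})"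

definition modelI_Etau :: "real \<Rightarrow> ennreal" where
  "modelI_Etau \<delta> = (\<integral>\<^sup>+ \<omega>. ennreal_of_enat (modelI_tau \<delta> \<omega>) \<partial>modelI_space)"

end

theory Submission imports Defs begin

definition tt :: "real \<Rightarrow> nat \<Rightarrow> real" where
  "tt \<delta> k = (1 + real k) / (2 + real k) - \<delta>"

definition good :: "real \<Rightarrow> (nat \<Rightarrow> real) \<Rightarrow> nat \<Rightarrow> bool" where
  "good \<delta> \<omega> n = (\<forall>k. 1 \<le> k \<and> k < n \<longrightarrow> \<omega> k < tt \<delta> k)"

lemma good_mono: "good \<delta> \<omega> n \<Longrightarrow> m \<le> n \<Longrightarrow> good \<delta> \<omega> m"
  by (auto simp: good_def)

lemma state_alt:
  assumes "1 \<le> n" "good \<delta> \<omega> n"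
  shows "modelI_state \<delta> \<omega> n =
     (if odd n then 0 else (if \<omega> 0 < 1/2 then 1 else -1),
      if odd n then (if \<omega> 0 < 1/2 then 1 else -1) else 0, n)"
  using assms
proof (induction n rule: nat_induct_at_least)
  case base
  then show ?case by simp
next
  case (Suc n)
  then obtain n' where n': "n = Suc n'" by (cases n) auto
  have g: "good \<delta> \<omega> n" using Suc.prems good_mono by force
  have lt: "\<omega> n < tt \<delta> n" using Suc.prems Suc.hyps by (auto simp: good_def)
  show ?case using Suc.IH[OF g] lt n' by (auto simp: tt_def)
qed

lemma S1: "modelI_S \<delta> \<omega> 1 = (if \<omega> 0 < 1/2 then 1 else -1)"
  by (simp add: modelI_S_def)

lemma S_good: "1 \<le> m \<Longrightarrow> good \<delta> \<omega> m \<Longrightarrow> modelI_S \<delta> \<omega> m \<in> {0, modelI_S \<delta> \<omega> 1}"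
  using state_alt[of m \<delta> \<omega>] by (auto simp: modelI_S_def S1[simplified])

lemma leave:
  assumes "1 \<le> n" "good \<delta> \<omega> n" "\<not> \<omega> n < tt \<delta> n"
  shows "modelI_S \<delta> \<omega> (Suc n) \<notin> {0, modelI_S \<delta> \<omega> 1}"
proof -
  obtain n' where n': "n = Suc n'" using assms by (cases n) auto
  show ?thesis using state_alt[OF assms(1,2)] assms(3) n'
    by (auto simp: modelI_S_def tt_def)
qed

lemma cond_iff:
  assumes "1 \<le> n"
  shows "(\<forall>m\<le>n. modelI_S \<delta> \<omega> m \<in> {0, modelI_S \<delta> \<omega> 1}) \<longleftrightarrow> good \<delta> \<omega> n"
proof
  assume "good \<delta> \<omega> n"
  then show "\<forall>m\<le>n. modelI_S \<delta> \<omega> m \<in> {0, modelI_S \<delta> \<omega> 1}"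
    using S_good good_mono by (metis insertI1 le_neq_implies_less less_one modelI_S_def not_le_imp_less)
next
  show "(\<forall>m\<le>n. modelI_S \<delta> \<omega> m \<in> {0, modelI_S \<delta> \<omega> 1}) \<Longrightarrow> good \<delta> \<omega> n"
    using assms
  proof (induction n rule: nat_induct_at_least)
    case base
    then show ?case by (simp add: good_def)
  next
    case (Suc n)
    have g: "good \<delta> \<omega> n" using Suc by auto
    have "\<omega> n < tt \<delta> n"
      using leave[OF Suc.hyps g] Suc.prems by blast
    then show ?case using g by (auto simp: good_def less_Suc_eq)
  qed
qed

lemma tau_less: "enat j < modelI_tau \<delta> \<omega> \<longleftrightarrow> good \<delta> \<omega> (Suc j)"
proof -
  have "enat j < modelI_tau \<delta> \<omega> \<longleftrightarrow>
     (\<exists>n\<in>{n. 1 \<le> n \<and> (\<forall>m\<le>n. modelI_S \<delta> \<omega> m \<in> {0, modelI_S \<delta> \<omega> 1})}. enat j < enat n)"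
    unfolding modelI_tau_def by (rule less_SUP_iff)
  also have "\<dots> \<longleftrightarrow> (\<exists>n. 1 \<le> n \<and> good \<delta> \<omega> n \<and> j < n)"
  proof
    assume "\<exists>n\<in>{n. 1 \<le> n \<and> (\<forall>m\<le>n. modelI_S \<delta> \<omega> m \<in> {0, modelI_S \<delta> \<omega> 1})}. enat j < enat n"
    then obtain n where "1 \<le> n" "\<forall>m\<le>n. modelI_S \<delta> \<omega> m \<in> {0, modelI_S \<delta> \<omega> 1}" "j < n" by auto
    then show "\<exists>n. 1 \<le> n \<and> good \<delta> \<omega> n \<and> j < n" using cond_iff by blast
  next
    assume "\<exists>n. 1 \<le> n \<and> good \<delta> \<omega> n \<and> j < n"
    then obtain n where "1 \<le> n" "good \<delta> \<omega> n" "j < n" by auto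
    then show "\<exists>n\<in>{n. 1 \<le> n \<and> (\<forall>m\<le>n. modelI_S \<delta> \<omega> m \<in> {0, modelI_S \<delta> \<omega> 1})}. enat j < enat n"
      using cond_iff[of n \<delta> \<omega>] by (intro bexI[of _ n]) auto
  qed
  also have "\<dots> \<longleftrightarrow> good \<delta> \<omega> (Suc j)"
    using good_mono by (metis Suc_le_eq le_add1 lessI plus_1_eq_Suc)
  finally show ?thesis .
qed

lemma enat_sum: "ennreal_of_enat x = (\<Sum>j. if enat j < x then 1 else 0)"
proof (cases x)
  case (enat m)
  have "(\<Sum>j. if enat j < x then 1 else (0::ennreal)) = (\<Sum>j\<in>{..<m}. if enat j < x then 1 else 0)"
    by (rule suminf_finite) (auto simp: enat)
  also have "\<dots> = of_nat m" by (simp add: enat)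
  finally show ?thesis by (simp add: enat)
next
  case infinity
  have "(\<Sum>j. ennreal ((\<lambda>_. 1::real) j)) = top"
    by (rule summable_iff_suminf_neq_top) (auto simp: summable_const_iff)
  then show ?thesis by (simp add: infinity)
qed


definition pp :: "real \<Rightarrow> nat \<Rightarrow> real" where
  "pp \<delta> j = (\<Prod>k\<in>{1..j}. tt \<delta> k)"

abbreviation "U \<equiv> uniform_measure lborel {0..1::real}"

lemma U_prob: "prob_space U"
  by (rule prob_space_uniform_measure) auto

lemma U_lt: "0 \<le> x \<Longrightarrow> x \<le> 1 \<Longrightarrow> emeasure U {..<x} = ennreal x"
proof -
  assume x: "0 \<le> x" "x \<le> 1"
  have "{0..1} \<inter> {..<x} = {0..<x}" using x by auto
  then show ?thesis using x by (simp add: divide_ennreal_def)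
qed

lemma A_eq: "{\<omega>. good \<delta> \<omega> (Suc j)} =
   prod_emb UNIV (\<lambda>_. U) {1..j} (Pi\<^sub>E {1..j} (\<lambda>k. {..<tt \<delta> k}))"
  by (auto simp: prod_emb_def space_PiM good_def less_Suc_eq_le PiE_iff)

lemma A_sets: "{\<omega>. good \<delta> \<omega> (Suc j)} \<in> sets modelI_space"
  unfolding A_eq modelI_space_def
  by (rule sets_PiM_I) auto

lemma A_meas:
  assumes "\<And>k. 1 \<le> k \<Longrightarrow> 0 \<le> tt \<delta> k \<and> tt \<delta> k \<le> 1"
  shows "emeasure modelI_space {\<omega>. good \<delta> \<omega> (Suc j)} = ennreal (pp \<delta> j)"
proof -
  have "emeasure modelI_space {\<omega>. good \<delta> \<omega> (Suc j)} = (\<Prod>k\<in>{1..j}. emeasure U {..<tt \<delta> k})"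
    unfolding A_eq modelI_space_def
    by (rule emeasure_PiM_emb) (auto simp: U_prob)
  also have "\<dots> = (\<Prod>k\<in>{1..j}. ennreal (tt \<delta> k))"
    using assms by (intro prod.cong) (auto simp: U_lt simp del: emeasure_uniform_measure)
  also have "\<dots> = ennreal (pp \<delta> j)"
    unfolding pp_def using assms by (subst prod_ennreal) auto
  finally show ?thesis .
qed

lemma Etau_eq:
  assumes "\<And>k. 1 \<le> k \<Longrightarrow> 0 \<le> tt \<delta> k \<and> tt \<delta> k \<le> 1"
  shows "modelI_Etau \<delta> = (\<Sum>j. ennreal (pp \<delta> j))"
proof -
  have "modelI_Etau \<delta> = (\<integral>\<^sup>+ \<omega>. (\<Sum>j. indicator {\<omega>. good \<delta> \<omega> (Suc j)} \<omega>) \<partial>modelI_space)"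
    unfolding modelI_Etau_def
    by (intro nn_integral_cong) (simp add: enat_sum[of "modelI_tau \<delta> _"] tau_less indicator_def of_bool_def)
  also have "\<dots> = (\<Sum>j. \<integral>\<^sup>+ \<omega>. indicator {\<omega>. good \<delta> \<omega> (Suc j)} \<omega> \<partial>modelI_space)"
    by (rule nn_integral_suminf) (rule borel_measurable_indicator[OF A_sets])
  also have "\<dots> = (\<Sum>j. ennreal (pp \<delta> j))"
    using A_meas[OF assms] A_sets by simp
  finally show ?thesis .
qed


lemma aprod: "(\<Prod>k\<in>{1..j}. (1 + real k) / (2 + real k)) = 2 / (real j + 2)"
proof (induction j)
  case 0
  then show ?case by simp
next
  case (Suc j)
  have "(\<Prod>k\<in>{1..Suc j}. (1 + real k) / (2 + real k)) =
      (\<Prod>k\<in>{1..j}. (1 + real k) / (2 + real k)) * ((1 + real (Suc j)) / (2 + real (Suc j)))"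
    by (simp add: prod.nat_ivl_Suc')
  also have "\<dots> = 2 / (real (Suc j) + 2)"
    using Suc by (simp add: field_simps)
  finally show ?case .
qed

lemma a_bounds: "2/3 \<le> (1 + real k) / (2 + real k) \<and> (1 + real k) / (2 + real k) < 1" if "1 \<le> k"
  using that by (auto simp: field_simps)

lemma pp_upper:
  assumes "0 < \<delta>" "\<delta> \<le> 1/2"
  shows "0 \<le> pp \<delta> j \<and> pp \<delta> j \<le> 2 / (real j + 2) * (1 - \<delta>) ^ j"
proof -
  have "0 \<le> pp \<delta> j" unfolding pp_def
  proof (intro prod_nonneg)
    fix k assume "k \<in> {1..j}"
    then have "1 \<le> k" by simp
    then show "0 \<le> tt \<delta> k" using a_bounds[of k] assms unfolding tt_def by linarith
  qed
  moreover have "pp \<delta> j \<le> (\<Prod>k\<in>{1..j}. (1 + real k) / (2 + real k) * (1 - \<delta>))"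
    unfolding pp_def tt_def
  proof (intro prod_mono conjI)
    fix k assume k: "k \<in> {1..j}"
    then have "1 \<le> k" by simp
    then show "0 \<le> (1 + real k) / (2 + real k) - \<delta>" using a_bounds[of k] assms by linarith
    have "(1 + real k) / (2 + real k) * \<delta> \<le> \<delta>"
      using a_bounds[of k] k assms by (intro mult_left_le_one_le) auto
    then show "(1 + real k) / (2 + real k) - \<delta> \<le> (1 + real k) / (2 + real k) * (1 - \<delta>)"
      unfolding right_diff_distrib mult_1_right by linarith
  qed
  moreover have "(\<Prod>k\<in>{1..j}. (1 + real k) / (2 + real k) * (1 - \<delta>)) = 2 / (real j + 2) * (1 - \<delta>) ^ j"
    unfolding prod.distrib aprod by simp
  ultimately show ?thesis by linarith
qed

lemma pp_lower:
  assumes "0 < \<delta>" "\<delta> \<le> 1/2"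
  shows "2 / (real j + 2) * (1 - 3/2*\<delta>) ^ j \<le> pp \<delta> j"
proof -
  have "(\<Prod>k\<in>{1..j}. (1 + real k) / (2 + real k) * (1 - 3/2*\<delta>)) \<le> pp \<delta> j"
    unfolding pp_def tt_def
  proof (intro prod_mono conjI)
    fix k assume k: "k \<in> {1..j}"
    then show "0 \<le> (1 + real k) / (2 + real k) * (1 - 3/2*\<delta>)" using a_bounds[of k] assms by auto
    have "2/3 * (3/2 * \<delta>) \<le> (1 + real k) / (2 + real k) * (3/2 * \<delta>)"
      using a_bounds[of k] k assms by (intro mult_right_mono) auto
    then have "\<delta> \<le> (1 + real k) / (2 + real k) * (3/2 * \<delta>)" by simp
    then show "(1 + real k) / (2 + real k) * (1 - 3/2*\<delta>) \<le> (1 + real k) / (2 + real k) - \<delta>"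
      unfolding right_diff_distrib mult_1_right by linarith
  qed
  moreover have "(\<Prod>k\<in>{1..j}. (1 + real k) / (2 + real k) * (1 - 3/2*\<delta>)) = 2 / (real j + 2) * (1 - 3/2*\<delta>) ^ j"
    unfolding prod.distrib aprod by simp
  ultimately show ?thesis by linarith
qed

lemma logsum: "0 \<le> y \<Longrightarrow> y < 1 \<Longrightarrow> (\<lambda>n. y ^ Suc n / real (Suc n)) sums (- ln (1 - y))"
proof -
  assume y: "0 \<le> y" "y < 1"
  have "(\<lambda>n. - ((-(-y))^n) / of_nat n) sums ln (1 + (-y))"
    by (rule ln_series') (use y in auto)
  then have "(\<lambda>n. - (- (y^n) / real n)) sums (- ln (1 - y))"
    by (intro sums_minus) simp
  then have "(\<lambda>n. y^n / real n) sums (- ln (1 - y) + y^0 / real 0)" by simp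
  then show ?thesis by (subst sums_Suc_iff) simp
qed

lemma main_bounds:
  assumes "0 < \<delta>" "\<delta> < exp (-1)"
  shows "summable (pp \<delta>) \<and> 1/3 * (- ln \<delta>) \<le> suminf (pp \<delta>) \<and> suminf (pp \<delta>) \<le> 4 * (- ln \<delta>)"
proof -
  have e: "exp (-1::real) \<le> 1/2"
    using exp_ge_add_one_self[of "1::real"] by (simp add: exp_minus field_simps)
  have d2: "\<delta> \<le> 1/2" using assms e by linarith
  have lnd: "ln \<delta> < -1" using assms by (metis ln_exp ln_less_cancel_iff exp_gt_zero)
  define x where "x = 1 - \<delta>"
  have x: "1/2 \<le> x" "x < 1" using d2 assms by (auto simp: x_def)
  define g where "g n = (2 / x) * (x ^ Suc n / real (Suc n))" for n
  have gs: "g sums ((2 / x) * (- ln (1 - x)))"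
    unfolding g_def by (intro sums_mult logsum) (use x in auto)
  have pg: "pp \<delta> n \<le> g n" for n
  proof -
    have "pp \<delta> n \<le> 2 / (real n + 2) * x ^ n" using pp_upper[OF assms(1) d2] by (simp add: x_def)
    also have "\<dots> \<le> 2 / (real n + 1) * x ^ n"
      using x by (intro mult_right_mono divide_left_mono) auto
    also have "\<dots> = g n" using x by (simp add: g_def field_simps)
    finally show ?thesis .
  qed
  have sp: "summable (pp \<delta>)"
    by (rule summable_comparison_test'[OF sums_summable[OF gs], of 0])
       (use pp_upper[OF assms(1) d2] pg in auto)
  have "suminf (pp \<delta>) \<le> suminf g"
    by (rule suminf_le[OF pg sp sums_summable[OF gs]])
  also have "\<dots> = (2 / x) * (- ln \<delta>)" using sums_unique[OF gs] by (simp add: x_def)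
  also have "\<dots> \<le> 4 * (- ln \<delta>)"
    using x lnd by (intro mult_right_mono) (auto simp: field_simps)
  finally have up: "suminf (pp \<delta>) \<le> 4 * (- ln \<delta>)" .
  define y where "y = 1 - 3/2 * \<delta>"
  have y: "0 \<le> y" "y < 1" using d2 assms by (auto simp: y_def)
  define h where "h n = (2 / 3) * (y ^ Suc n / real (Suc n))" for n
  have hs: "h sums ((2 / 3) * (- ln (1 - y)))"
    unfolding h_def by (intro sums_mult logsum) (use y in auto)
  have hp: "h n \<le> pp \<delta> n" for n
  proof -
    have "h n \<le> (2/3) * (y ^ n / real (Suc n))"
      unfolding h_def using y by (intro mult_left_mono divide_right_mono power_decreasing) auto
    also have "\<dots> = y ^ n * (2 / (3 * real n + 3))" by (simp add: field_simps)
    also have "\<dots> \<le> y ^ n * (2 / (real n + 2))"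
      using y by (intro mult_left_mono divide_left_mono) auto
    also have "\<dots> \<le> pp \<delta> n" using pp_lower[OF assms(1) d2, of n] by (simp add: y_def mult.commute)
    finally show ?thesis .
  qed
  have "(2 / 3) * (- ln (1 - y)) = suminf h" using sums_unique[OF hs] by simp
  also have "\<dots> \<le> suminf (pp \<delta>)"
    by (rule suminf_le[OF hp sums_summable[OF hs] sp])
  finally have lo1: "(2 / 3) * (- ln (1 - y)) \<le> suminf (pp \<delta>)" .
  have "ln (1 - y) = ln (3/2) + ln \<delta>" 
  proof -
    have "1 - y = 3/2 * \<delta>" by (simp add: y_def)
    then show ?thesis using assms by (simp only: ln_mult) simp
  qed
  moreover have "ln (3/2::real) \<le> 1/2" using ln_le_minus_one[of "3/2::real"] by simp
  ultimately have "1/3 * (- ln \<delta>) \<le> (2 / 3) * (- ln (1 - y))" using lnd by linarith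
  with lo1 up sp show ?thesis by linarith
qed


lemma E_bounds:
  assumes "0 < \<delta>" "\<delta> < exp (-1)"
  shows "ennreal (1/3 * \<bar>ln \<delta>\<bar>) \<le> modelI_Etau \<delta> \<and> modelI_Etau \<delta> \<le> ennreal (4 * \<bar>ln \<delta>\<bar>)"
proof -
  have e: "exp (-1::real) \<le> 1/2"
    using exp_ge_add_one_self[of "1::real"] by (simp add: exp_minus field_simps)
  have lnd: "ln \<delta> < -1" using assms by (metis ln_exp ln_less_cancel_iff exp_gt_zero)
  have tt: "0 \<le> tt \<delta> k \<and> tt \<delta> k \<le> 1" if "1 \<le> k" for k
    using a_bounds[OF that] assms e unfolding tt_def by linarith
  have d2: "\<delta> \<le> 1/2" using assms e by linarith
  note mb = main_bounds[OF assms]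
  have "modelI_Etau \<delta> = (\<Sum>j. ennreal (pp \<delta> j))"
    by (rule Etau_eq[OF tt])
  also have "\<dots> = ennreal (suminf (pp \<delta>))"
    by (rule suminf_ennreal2) (use pp_upper[OF assms(1) d2] mb in auto)
  finally have E: "modelI_Etau \<delta> = ennreal (suminf (pp \<delta>))" .
  have a: "\<bar>ln \<delta>\<bar> = - ln \<delta>" using lnd by simp
  show ?thesis unfolding E a using mb by (intro conjI ennreal_leI) auto
qed

theorem mainTheorem3:
  shows "(modelI_Etau \<longlongrightarrow> \<infinity>) (at_right 0)
    \<and> (\<exists>c C::real. 0 < c \<and> c \<le> C \<and>
         (\<forall>\<^sub>F \<delta> in at_right 0.
            ennreal (c * \<bar>ln \<delta>\<bar>) \<le> modelI_Etau \<delta> \<and>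
            modelI_Etau \<delta> \<le> ennreal (C * \<bar>ln \<delta>\<bar>)))"
proof -
  have ev: "\<forall>\<^sub>F \<delta> in at_right 0. ennreal (1/3 * \<bar>ln \<delta>\<bar>) \<le> modelI_Etau \<delta> \<and>
            modelI_Etau \<delta> \<le> ennreal (4 * \<bar>ln \<delta>\<bar>)"
    unfolding eventually_at_right_field
    by (intro exI[of _ "exp (-1)"] conjI allI impI exp_gt_zero E_bounds)
  have lim: "(modelI_Etau \<longlongrightarrow> \<infinity>) (at_right 0)"
  proof (rule order_tendstoI)
    fix a :: ennreal assume "a < \<infinity>"
    then obtain r where r: "a = ennreal r" "0 \<le> r" by (cases a) auto
    have "\<forall>\<^sub>F \<delta> in at_right 0. ln \<delta> \<le> - 3 * r - 3"
      using ln_at_0 unfolding filterlim_at_bot by blast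
    then show "\<forall>\<^sub>F \<delta> in at_right 0. a < modelI_Etau \<delta>"
      using ev
    proof eventually_elim
      case (elim \<delta>)
      have "ennreal r < ennreal (1/3 * \<bar>ln \<delta>\<bar>)"
        using elim(1) r by (intro ennreal_lessI) auto
      then show ?case using elim(2) r(1) by (metis less_le_trans)
    qed
  next
    fix a :: ennreal assume "\<infinity> < a"
    then show "\<forall>\<^sub>F \<delta> in at_right 0. modelI_Etau \<delta> < a" by simp
  qed
  show ?thesis using lim ev by (intro conjI exI[of _ "1/3"] exI[of _ "4::real"]) auto
qed

end
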